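(* Let $Y=\{(x,y)\in\mathbb{R}^2:(x/a)^2+y^2=1\}$ with $1<a\le\sqrt2$, let $X\subseteq Y$ and $0<r<2$. Identify $Y$ with the circle $S^1$ via an orientation-preserving homeomorphism. Orient the edges of the 1-skeleton $\mathrm{VR}_<(X;r)$ by declaring $p\to p'$ iff $p'\in(p,g_r(p))_Y$, and those of $\mathrm{VR}_\le(X;r)$ by declaring $p\to p'$ iff $p'\in(p,g_r(p)]_Y$. Then both resulting directed graphs are cyclic graphs.
   Context: $d$ is the Euclidean metric. $Y$ is oriented clockwise; $(p,q)_Y$, $(p,q]_Y$, $[p,q]_Y$ denote clockwise arcs from $p$ to $q$, and $\prec$ the clockwise cyclic order (points distinct). $h^{-1}(p)$ denotes the point of $Y$ farthest from $p$; for $0<r<2$, $g_r(p)$ is the unique point $q\in[p,h^{-1}(p)]_Y$ with $d(p,q)=r$. $\mathrm{VR}_<(X;r)$ (resp. $\mathrm{VR}_\le(X;r)$) here denotes the graph on $X$ with an edge between points at distance $<r$ (resp. $\le r$). A directed graph with vertex set $V\subseteq S^1$ is cyclic if it has no loops and no opposite edge pairs, and whenever $v\to u$ is an edge, $v\to w$ and $w\to u$ are edges for all $w\in V$ with $v\prec w\prec u\prec v$. *)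

theory Defs
  imports "HOL-Analysis.Analysis"
begin

text \<open>Points of the plane are pairs of reals; dist on real \<times> real is the Euclidean metric.\<close>

definition ellipse :: "real \<Rightarrow> (real \<times> real) set" where
  "ellipse a = {(x, y). (x / a)^2 + y^2 = 1}"

text \<open>Clockwise parametrisation of the ellipse: (0,1) to (a,0) to (0,-1) to (-a,0).\<close>
definition ell_param :: "real \<Rightarrow> real \<Rightarrow> real \<times> real" where
  "ell_param a t = (a * sin t, cos t)"

definition cw_arc_open :: "real \<Rightarrow> real \<times> real \<Rightarrow> real \<times> real \<Rightarrow> (real \<times> real) set" where
  "cw_arc_open a p q = {z. \<exists>\<alpha> \<beta> s. ell_param a \<alpha> = p \<and> ell_param a (\<alpha> + \<beta>) = q
      \<and> 0 < \<beta> \<and> \<beta> \<le> 2 * pi \<and> 0 < s \<and> s < \<beta> \<and> z = ell_param a (\<alpha> + s)}"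

definition cw_arc_half :: "real \<Rightarrow> real \<times> real \<Rightarrow> real \<times> real \<Rightarrow> (real \<times> real) set" where
  "cw_arc_half a p q = {z. \<exists>\<alpha> \<beta> s. ell_param a \<alpha> = p \<and> ell_param a (\<alpha> + \<beta>) = q
      \<and> 0 < \<beta> \<and> \<beta> \<le> 2 * pi \<and> 0 < s \<and> s \<le> \<beta> \<and> z = ell_param a (\<alpha> + s)}"

definition cw_arc_closed :: "real \<Rightarrow> real \<times> real \<Rightarrow> real \<times> real \<Rightarrow> (real \<times> real) set" where
  "cw_arc_closed a p q = {z. \<exists>\<alpha> \<beta> s. ell_param a \<alpha> = p \<and> ell_param a (\<alpha> + \<beta>) = q
      \<and> 0 \<le> \<beta> \<and> \<beta> \<le> 2 * pi \<and> 0 \<le> s \<and> s \<le> \<beta> \<and> z = ell_param a (\<alpha> + s)}"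

definition farthest :: "real \<Rightarrow> real \<times> real \<Rightarrow> real \<times> real" where
  "farthest a p = (THE q. q \<in> ellipse a \<and> (\<forall>z \<in> ellipse a. dist p z \<le> dist p q))"

definition g_r :: "real \<Rightarrow> real \<Rightarrow> real \<times> real \<Rightarrow> real \<times> real" where
  "g_r a r p = (THE q. q \<in> cw_arc_closed a p (farthest a p) \<and> dist p q = r)"

definition VR_lt_dir :: "real \<Rightarrow> real \<Rightarrow> (real \<times> real) set \<Rightarrow> real \<times> real \<Rightarrow> real \<times> real \<Rightarrow> bool" where
  "VR_lt_dir a r X p p' \<longleftrightarrow> p \<in> X \<and> p' \<in> X \<and> p \<noteq> p' \<and> dist p p' < r
      \<and> p' \<in> cw_arc_open a p (g_r a r p)"

definition VR_le_dir :: "real \<Rightarrow> real \<Rightarrow> (real \<times> real) set \<Rightarrow> real \<times> real \<Rightarrow> real \<times> real \<Rightarrow> bool" where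
  "VR_le_dir a r X p p' \<longleftrightarrow> p \<in> X \<and> p' \<in> X \<and> p \<noteq> p' \<and> dist p p' \<le> r
      \<and> p' \<in> cw_arc_half a p (g_r a r p)"

text \<open>Cyclic directed graph with vertex set V on Y (with clockwise cyclic order).
  v \<prec> w \<prec> u \<prec> v for distinct points means w lies in the open clockwise arc (v,u)_Y.\<close>
definition cyclic_graph :: "real \<Rightarrow> (real \<times> real) set \<Rightarrow> (real \<times> real \<Rightarrow> real \<times> real \<Rightarrow> bool) \<Rightarrow> bool" where
  "cyclic_graph a V E \<longleftrightarrow>
     (\<forall>u v. E u v \<longrightarrow> u \<in> V \<and> v \<in> V) \<and>
     (\<forall>v. \<not> E v v) \<and>
     (\<forall>u v. \<not> (E v u \<and> E u v)) \<and>
     (\<forall>v u. E v u \<longrightarrow> (\<forall>w \<in> V. w \<in> cw_arc_open a v u \<longrightarrow> E v w \<and> E w u))"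

end

theory Submission
  imports Defs
begin

lemma crit_max_b:
  fixes b x0 y0 x y x1 y1 :: real
  assumes a: "1 < b" "b \<le> 2"
  and p: "x0^2/b + y0^2 = 1" and q: "x^2/b+y^2=1" and z: "x1^2/b+y1^2=1"
  and ne: "(x,y) \<noteq> (x0,y0)"
  and crit: "b*(x-x0)*y = (y-y0)*x"
  shows "(x1-x0)^2+(y1-y0)^2 \<le> (x-x0)^2+(y-y0)^2 \<and>
         ((x1-x0)^2+(y1-y0)^2 = (x-x0)^2+(y-y0)^2 \<longrightarrow> x1=x \<and> y1=y)"
proof -
  have a0: "b > 0" "b \<noteq> 0" using a by auto
  define N where "N = x^2/b^2 + y^2"
  define M where "M = x^2/b^3 + y^2"
  have xy: "x \<noteq> 0 \<or> y \<noteq> 0" using q by auto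
  have N0: "N > 0" unfolding N_def using xy a0
    by (auto intro: add_pos_nonneg add_nonneg_pos)
  have M0: "M > 0" unfolding M_def using xy a0
    by (auto intro: add_pos_nonneg add_nonneg_pos)
  have a4: "b^2 \<le> b^3" using a by (simp add: power_increasing)
  have MN: "M \<le> N" unfolding M_def N_def
    using a4 a0 by (simp add: frac_le)
  define l where "l = ((x-x0)*(x/b) + (y-y0)*y)/N"
  have crit': "(y-y0)*x/b = (x-x0)*y" using crit a0 by (simp add: field_simps)
  have h1: "x - x0 = l*x/b"
  proof -
    have "l*x/b = ((x-x0)*(x^2/b^2) + ((y-y0)*x/b)*y)/N"
      unfolding l_def using a0 N0 by (simp add: field_simps power2_eq_square)
    also have "\<dots> = (x-x0)*N/N" unfolding crit' N_def by (simp add: algebra_simps power2_eq_square)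
    finally show ?thesis using N0 by simp
  qed
  have h2: "y - y0 = l*y"
  proof -
    have "l*y = ((x-x0)*y*(x/b) + (y-y0)*y^2)/N"
      unfolding l_def using a0 N0 by (simp add: field_simps power2_eq_square)
    also have "\<dots> = (y-y0)*N/N"
    proof -
      have e: "(x-x0)*y*(x/b) = (y-y0)*(x^2/b^2)"
      proof -
        have "(x-x0)*y*(x/b) = ((y-y0)*x/b)*(x/b)" using crit' by simp
        thus ?thesis by (simp add: power2_eq_square)
      qed
      show ?thesis unfolding N_def e by (simp add: algebra_simps power2_eq_square)
    qed
    finally show ?thesis using N0 by simp
  qed
  have l0: "l \<noteq> 0" using ne h1 h2 by auto
  have x0e: "x0 = x - l*x/b" using h1 by simp
  have y0e: "y0 = y - l*y" using h2 by simp
  have "x0^2/b + y0^2 = (x^2/b+y^2) - 2*l*N + l^2*M"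
    unfolding x0e y0e N_def M_def using a0 by (simp add: field_simps power2_eq_square power3_eq_cube) 
  hence "l^2*M - 2*l*N = 0" using p q by linarith
  hence "l*(l*M - 2*N) = 0" by (simp add: algebra_simps power2_eq_square)
  hence lM: "l*M = 2*N" using l0 by simp
  have l2: "l \<ge> 2"
  proof -
    have "l*M \<ge> 2*M" using lM MN by simp
    thus ?thesis using M0 by simp
  qed
  have ident: "(x1-x0)^2+(y1-y0)^2 = (x-x0)^2+(y-y0)^2 + (1-l/b)*(x1-x)^2 + (1-l)*(y1-y)^2"
  proof -
    have "(x1-x0)^2+(y1-y0)^2 - ((x-x0)^2+(y-y0)^2 + (1-l/b)*(x1-x)^2 + (1-l)*(y1-y)^2)
       = l*(x1^2/b+y1^2) - l*(x^2/b+y^2)"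
      unfolding x0e y0e using a0 by (simp add: field_simps power2_eq_square)
    thus ?thesis using z q by simp
  qed
  have c1: "1 - l/b \<le> 0" using l2 a a0 by (simp add: field_simps)
  have t1: "(1-l/b)*(x1-x)^2 \<le> 0" using c1 by (simp add: mult_nonpos_nonneg)
  have t2: "(1-l)*(y1-y)^2 \<le> 0" using l2 by (simp add: mult_nonpos_nonneg)
  show ?thesis
  proof (intro conjI impI)
    show "(x1-x0)^2+(y1-y0)^2 \<le> (x-x0)^2+(y-y0)^2" using ident t1 t2 by linarith
  next
    assume eq: "(x1-x0)^2+(y1-y0)^2 = (x-x0)^2+(y-y0)^2"
    hence e1: "(1-l/b)*(x1-x)^2 = 0" and e2: "(1-l)*(y1-y)^2 = 0" using ident t1 t2 by linarith+
    from e2 l2 show yy: "y1 = y" by simp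
    show "x1 = x"
    proof (rule ccontr)
      assume "x1 \<noteq> x"
      with e1 have "l = b" using a0 by (simp add: field_simps)
      hence "l = 2" "b = 2" using l2 a by auto
      hence "M = N" using lM by simp
      hence "x^2/b^3 = x^2/b^2" unfolding M_def N_def by simp
      hence "x = 0" using \<open>b = 2\<close> by simp
      moreover have "x1^2 = x^2" using z q yy a0 by (simp add: field_simps power2_eq_square)
      ultimately show False using \<open>x1 \<noteq> x\<close> by simp
    qed
  qed
qed

definition fd :: "real \<Rightarrow> real \<Rightarrow> real \<Rightarrow> real" where
  "fd a \<alpha> \<delta> = (a * sin(\<alpha>+\<delta>) - a * sin \<alpha>)^2 + (cos(\<alpha>+\<delta>) - cos \<alpha>)^2"

lemma dist_param_sq: "(dist (ell_param a s) (ell_param a t))^2 = (a * sin s - a * sin t)^2 + (cos s - cos t)^2"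
  by (simp add: ell_param_def dist_Pair_Pair dist_real_def)

lemma dist_param: "dist (ell_param a \<alpha>) (ell_param a (\<alpha>+\<delta>)) = sqrt (fd a \<alpha> \<delta>)"
proof -
  have "(dist (ell_param a \<alpha>) (ell_param a (\<alpha>+\<delta>)))^2 = fd a \<alpha> \<delta>"
    unfolding dist_param_sq fd_def by (simp add: power2_commute)
  thus ?thesis by (metis real_sqrt_unique zero_le_dist)
qed

lemma fd_nonneg: "fd a \<alpha> \<delta> \<ge> 0" unfolding fd_def by simp

lemma param_in: "a \<noteq> 0 \<Longrightarrow> ell_param a t \<in> ellipse a"
  by (simp add: ell_param_def ellipse_def power_divide power_mult_distrib)

lemma param_surj: assumes "a \<noteq> 0" "p \<in> ellipse a" shows "\<exists>t. ell_param a t = p"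
proof -
  obtain x y where p: "p = (x,y)" by (cases p)
  have "y^2 + (x/a)^2 = 1" using assms(2) p by (simp add: ellipse_def)
  then obtain t where "y = cos t" "x/a = sin t" using sincos_total_2pi by metis
  hence "ell_param a t = p" using p assms(1) by (simp add: ell_param_def field_simps)
  thus ?thesis by blast
qed

lemma param_eq_iff: "a \<noteq> 0 \<Longrightarrow> ell_param a u = ell_param a v \<longleftrightarrow> sin u = sin v \<and> cos u = cos v"
  by (auto simp: ell_param_def)

lemma param_shift: assumes "a \<noteq> 0" "ell_param a \<alpha>' = ell_param a \<alpha>"
  shows "ell_param a (\<alpha>'+x) = ell_param a (\<alpha>+x)"
  using assms by (simp add: param_eq_iff sin_add cos_add)

lemma param_period: "ell_param a (t + 2*pi) = ell_param a t"
  by (simp add: ell_param_def)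

lemma param_inj: assumes "a \<noteq> 0" "ell_param a u = ell_param a v" "\<bar>u - v\<bar> < 2*pi"
  shows "u = v"
proof -
  have sc: "sin u = sin v" "cos u = cos v" using assms(1,2) param_eq_iff by auto
  have "cos (u - v) = 1" using sc by (simp add: cos_diff)
  then obtain n :: int where n: "u - v = real_of_int n * 2 * pi" using cos_one_2pi_int by blast
  have "\<bar>of_int n\<bar> * (2*pi) < 1 * (2*pi)" using assms(3) n by (simp add: abs_mult)
  hence "\<bar>of_int n\<bar> < (1::real)" by simp
  hence "n = 0" by linarith
  thus ?thesis using n by simp
qed

lemma fd_deriv: "DERIV (fd a \<alpha>) \<delta> :> 2*(a * sin(\<alpha>+\<delta>) - a * sin \<alpha>)*(a * cos(\<alpha>+\<delta>)) - 2*(cos(\<alpha>+\<delta>) - cos \<alpha>)* sin(\<alpha>+\<delta>)"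
  unfolding fd_def
  by (rule derivative_eq_intros refl | simp)+ (simp add: algebra_simps)

lemma fd_cont: "continuous_on S (fd a \<alpha>)"
  unfolding fd_def by (intro continuous_intros)

lemma fd_0: "fd a \<alpha> 0 = 0" by (simp add: fd_def)
lemma fd_2pi: "fd a \<alpha> (2*pi) = 0" by (simp add: fd_def)
lemma fd_pi: assumes "1 < a" shows "fd a \<alpha> pi \<ge> 4"
proof -
  have "fd a \<alpha> pi = 4*a^2*(sin \<alpha>)^2 + 4*(cos \<alpha>)^2" by (simp add: fd_def power2_eq_square algebra_simps)
  also have "\<dots> \<ge> 4*(sin \<alpha>)^2 + 4*(cos \<alpha>)^2"
  proof -
    have a2: "1 \<le> a^2" by (metis assms less_imp_le one_le_power)
    have "(a^2 - 1)*(sin \<alpha>)^2 \<ge> 0" using a2 by simp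
    thus ?thesis by (simp add: algebra_simps)
  qed
  also have "4*(sin \<alpha>)^2 + 4*(cos \<alpha>)^2 = 4" by (metis distrib_left mult.right_neutral sin_cos_squared_add)
  finally show ?thesis .
qed

lemma dist_pair_eq: "dist (u1::real,u2::real) (v1,v2) = sqrt ((v1-u1)^2+(v2-u2)^2)"
  by (simp add: dist_Pair_Pair dist_real_def power2_commute)

lemma crit_param:
  assumes a: "1 < a" "a^2 \<le> 2"
    and d0: "2*(a * sin(\<alpha>+\<delta>) - a * sin \<alpha>)*(a * cos(\<alpha>+\<delta>)) - 2*(cos(\<alpha>+\<delta>) - cos \<alpha>) * sin(\<alpha>+\<delta>) = 0"
    and ne: "ell_param a (\<alpha>+\<delta>) \<noteq> ell_param a \<alpha>"
    and z: "z \<in> ellipse a"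
  shows "dist (ell_param a \<alpha>) z \<le> dist (ell_param a \<alpha>) (ell_param a (\<alpha>+\<delta>)) \<and>
     (dist (ell_param a \<alpha>) z = dist (ell_param a \<alpha>) (ell_param a (\<alpha>+\<delta>)) \<longrightarrow> z = ell_param a (\<alpha>+\<delta>))"
proof -
  obtain x1 y1 where zz: "z = (x1,y1)" by (cases z)
  have a0: "a \<noteq> 0" using a by auto
  define x0 where "x0 = a * sin \<alpha>"
  define y0 where "y0 = cos \<alpha>"
  define x where "x = a * sin (\<alpha>+\<delta>)"
  define y where "y = cos (\<alpha>+\<delta>)"
  have e1: "x1^2/a^2 + y1^2 = 1" using z zz by (simp add: ellipse_def power_divide)
  have e0: "x0^2/a^2 + y0^2 = 1" using a0 by (simp add: x0_def y0_def power_mult_distrib)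
  have eq: "x^2/a^2 + y^2 = 1" using a0 by (simp add: x_def y_def power_mult_distrib)
  have ne': "(x,y) \<noteq> (x0,y0)" using ne by (simp add: x_def y_def x0_def y0_def ell_param_def)
  have "2*((x - x0) * (a * cos(\<alpha>+\<delta>)) - (y - y0) * sin(\<alpha>+\<delta>)) = 0"
    using d0 unfolding x_def x0_def y_def y0_def by (simp add: algebra_simps)
  hence "(x - x0) * (a * cos(\<alpha>+\<delta>)) = (y - y0) * sin(\<alpha>+\<delta>)" by simp
  hence "a * ((x - x0) * (a * cos(\<alpha>+\<delta>))) = a * ((y - y0) * sin(\<alpha>+\<delta>))" by simp
  hence cr: "a^2*(x-x0)*y = (y-y0)*x" unfolding y_def x_def by (simp add: algebra_simps power2_eq_square)
  have a2: "1 < a^2" using a by (metis less_imp_le one_less_power zero_less_numeral pos2)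
  note M = crit_max_b[OF a2 a(2) e0 eq e1 ne' cr]
  have pe: "ell_param a \<alpha> = (x0,y0)" "ell_param a (\<alpha>+\<delta>) = (x,y)"
    by (simp_all add: ell_param_def x0_def y0_def x_def y_def)
  show ?thesis unfolding pe zz dist_pair_eq
    using M by (auto intro: real_sqrt_le_mono)
qed

lemma inj_incr:
  fixes f :: "real \<Rightarrow> real"
  assumes cont: "continuous_on {u..v} f"
    and inj: "\<And>x y. u \<le> x \<Longrightarrow> x < y \<Longrightarrow> y \<le> v \<Longrightarrow> f x \<noteq> f y"
    and low: "\<And>t. u \<le> t \<Longrightarrow> t \<le> v \<Longrightarrow> f u \<le> f t"
    and h: "u \<le> x" "x < y" "y \<le> v"
  shows "f x < f y"
proof (rule ccontr)
  assume "\<not> f x < f y"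
  hence lt: "f y \<le> f x" by simp
  have "f u \<le> f y" using low h by simp
  moreover have "continuous_on {u..x} f" using cont h by (auto intro: continuous_on_subset)
  ultimately obtain z where z: "u \<le> z" "z \<le> x" "f z = f y" using IVT'[of f u "f y" x] lt h by auto
  thus False using inj[of z y] h by auto
qed

lemma core:
  assumes a: "1 < a" "a^2 \<le> 2"
  shows "\<exists>D. 0 < D \<and> D < 2*pi \<and> farthest a (ell_param a \<alpha>) = ell_param a (\<alpha>+D)
     \<and> (\<forall>t\<in>{0..2*pi}. fd a \<alpha> t \<le> fd a \<alpha> D)
     \<and> (\<forall>x y. 0 \<le> x \<longrightarrow> x < y \<longrightarrow> y \<le> D \<longrightarrow> fd a \<alpha> x < fd a \<alpha> y)
     \<and> (\<forall>x y. D \<le> x \<longrightarrow> x < y \<longrightarrow> y \<le> 2*pi \<longrightarrow> fd a \<alpha> y < fd a \<alpha> x)"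
proof -
  let ?f = "fd a \<alpha>"
  let ?p = "ell_param a \<alpha>"
  have a0: "a \<noteq> 0" using a by auto
  define d' where "d' t = 2*(a * sin(\<alpha>+t) - a * sin \<alpha>)*(a * cos(\<alpha>+t)) - 2*(cos(\<alpha>+t) - cos \<alpha>) * sin(\<alpha>+t)" for t
  have der: "\<And>t. DERIV ?f t :> d' t" unfolding d'_def by (rule fd_deriv)
  have difft: "\<And>t. ?f differentiable (at t)" using der unfolding real_differentiable_def by blast
  obtain D where D: "D \<in> {0..2*pi}" "\<forall>t\<in>{0..2*pi}. ?f t \<le> ?f D"
    using continuous_attains_sup[of "{0..2*pi}" ?f] fd_cont by auto
  have "?f pi \<le> ?f D" using D(2) pi_ge_zero by simp
  hence fD: "?f D \<ge> 4" using fd_pi[OF a(1), of \<alpha>] by linarith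
  have D0: "0 < D" using D(1) fD fd_0[of a \<alpha>] by (cases "D = 0") auto
  have D2: "D < 2*pi" using D(1) fD fd_2pi[of a \<alpha>] by (cases "D = 2*pi") auto
  have dD: "d' D = 0"
  proof (rule DERIV_local_max[OF der, of "min D (2*pi - D)"])
    show "0 < min D (2*pi - D)" using D0 D2 by simp
    show "\<forall>y. \<bar>D - y\<bar> < min D (2 * pi - D) \<longrightarrow> ?f y \<le> ?f D"
    proof (intro allI impI)
      fix y assume "\<bar>D - y\<bar> < min D (2 * pi - D)"
      hence "y \<in> {0..2*pi}" by (auto simp: abs_if split: if_splits)
      thus "?f y \<le> ?f D" using D(2) by blast
    qed
  qed
  have pnz: "\<And>t. 0 < t \<Longrightarrow> t < 2*pi \<Longrightarrow> ell_param a (\<alpha>+t) \<noteq> ?p"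
  proof
    fix t assume "0 < t" "t < 2*pi" "ell_param a (\<alpha>+t) = ?p"
    hence "\<alpha>+t = \<alpha>" using param_inj[OF a0, of "\<alpha>+t" \<alpha>] by simp
    thus False using \<open>0 < t\<close> by simp
  qed
  have critD: "\<And>z. z \<in> ellipse a \<Longrightarrow> dist ?p z \<le> dist ?p (ell_param a (\<alpha>+D)) \<and>
     (dist ?p z = dist ?p (ell_param a (\<alpha>+D)) \<longrightarrow> z = ell_param a (\<alpha>+D))"
    using crit_param[OF a, of \<alpha> D] dD pnz[OF D0 D2] unfolding d'_def by blast
  have far: "farthest a ?p = ell_param a (\<alpha>+D)"
    unfolding farthest_def
  proof (rule the_equality)
    show "ell_param a (\<alpha>+D) \<in> ellipse a \<and> (\<forall>z\<in>ellipse a. dist ?p z \<le> dist ?p (ell_param a (\<alpha>+D)))"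
      using param_in[OF a0] critD by blast
    fix q assume q: "q \<in> ellipse a \<and> (\<forall>z\<in>ellipse a. dist ?p z \<le> dist ?p q)"
    hence "dist ?p (ell_param a (\<alpha>+D)) \<le> dist ?p q" using param_in[OF a0] by blast
    moreover have "dist ?p q \<le> dist ?p (ell_param a (\<alpha>+D))" and
      "dist ?p q = dist ?p (ell_param a (\<alpha>+D)) \<longrightarrow> q = ell_param a (\<alpha>+D)"
      using critD[of q] q by auto
    ultimately show "q = ell_param a (\<alpha>+D)" by linarith
  qed
  have noncrit: "\<And>z. 0 < z \<Longrightarrow> z < 2*pi \<Longrightarrow> d' z = 0 \<Longrightarrow> z = D"
  proof -
    fix z assume z: "0 < z" "z < 2*pi" "d' z = 0"
    have cz: "\<And>w. w \<in> ellipse a \<Longrightarrow> dist ?p w \<le> dist ?p (ell_param a (\<alpha>+z)) \<and>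
     (dist ?p w = dist ?p (ell_param a (\<alpha>+z)) \<longrightarrow> w = ell_param a (\<alpha>+z))"
      using crit_param[OF a, of \<alpha> z] z pnz[OF z(1,2)] unfolding d'_def by blast
    have "dist ?p (ell_param a (\<alpha>+D)) \<le> dist ?p (ell_param a (\<alpha>+z))"
      using cz param_in[OF a0] by blast
    moreover have "dist ?p (ell_param a (\<alpha>+z)) \<le> dist ?p (ell_param a (\<alpha>+D))"
      using critD param_in[OF a0] by blast
    ultimately have "dist ?p (ell_param a (\<alpha>+D)) = dist ?p (ell_param a (\<alpha>+z))" by linarith
    hence "ell_param a (\<alpha>+D) = ell_param a (\<alpha>+z)" using cz[of "ell_param a (\<alpha>+D)"] param_in[OF a0] by blast
    hence "\<alpha>+D = \<alpha>+z" using param_inj[OF a0] z D0 D2 by force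
    thus "z = D" by simp
  qed
  have inj: "\<And>x y. 0 \<le> x \<Longrightarrow> x < y \<Longrightarrow> y \<le> 2*pi \<Longrightarrow> (y \<le> D \<or> D \<le> x) \<Longrightarrow> ?f x \<noteq> ?f y"
  proof
    fix x y assume h: "0 \<le> x" "x < y" "y \<le> 2*pi" "y \<le> D \<or> D \<le> x" "?f x = ?f y"
    obtain z where z: "x < z" "z < y" "DERIV ?f z :> 0"
    proof -
      have "\<exists>z. x < z \<and> z < y \<and> DERIV ?f z :> 0"
        by (rule Rolle) (use h fd_cont difft in auto)
      thus ?thesis using that by blast
    qed
    have "d' z = 0" using DERIV_unique[OF der z(3)] .
    hence "z = D" using noncrit[of z] z h by linarith
    thus False using z h by linarith
  qed
  have inc: "\<forall>x y. 0 \<le> x \<longrightarrow> x < y \<longrightarrow> y \<le> D \<longrightarrow> ?f x < ?f y"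
  proof (intro allI impI)
    fix x y assume h: "0 \<le> x" "x < y" "y \<le> D"
    show "?f x < ?f y"
    proof (rule inj_incr[of 0 D ?f x y])
      show "continuous_on {0..D} ?f" by (rule fd_cont)
      show "\<And>x y. 0 \<le> x \<Longrightarrow> x < y \<Longrightarrow> y \<le> D \<Longrightarrow> ?f x \<noteq> ?f y" using inj D2 by simp
      show "\<And>t. 0 \<le> t \<Longrightarrow> t \<le> D \<Longrightarrow> ?f 0 \<le> ?f t" using fd_0 fd_nonneg by simp
    qed (use h in auto)
  qed
  have dec: "\<forall>x y. D \<le> x \<longrightarrow> x < y \<longrightarrow> y \<le> 2*pi \<longrightarrow> ?f y < ?f x"
  proof (intro allI impI)
    fix x y assume h: "D \<le> x" "x < y" "y \<le> 2*pi"
    let ?g = "\<lambda>t. ?f (-t)"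
    have "?g (-y) < ?g (-x)"
    proof (rule inj_incr[of "-2*pi" "-D" ?g "-y" "-x"])
      show "continuous_on {-2*pi..-D} ?g" unfolding fd_def by (intro continuous_intros)
      show "\<And>u v. -2*pi \<le> u \<Longrightarrow> u < v \<Longrightarrow> v \<le> -D \<Longrightarrow> ?g u \<noteq> ?g v"
      proof -
        fix u v assume uv: "-2*pi \<le> u" "u < v" "v \<le> -D"
        have "?f (-v) \<noteq> ?f (-u)" using inj[of "-v" "-u"] uv D0 by simp
        thus "?g u \<noteq> ?g v" by simp
      qed
      show "\<And>t. -2*pi \<le> t \<Longrightarrow> t \<le> -D \<Longrightarrow> ?g (-2*pi) \<le> ?g t" using fd_2pi fd_nonneg by simp
    qed (use h in auto)
    thus "?f y < ?f x" by simp
  qed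
  show ?thesis using D0 D2 far D(2) inc dec by blast
qed

lemma gr_char:
  assumes a: "1 < a" "a^2 \<le> 2" and r: "0 < r" "r < 2"
  shows "\<exists>\<gamma>. 0 < \<gamma> \<and> \<gamma> < pi \<and> fd a \<alpha> \<gamma> = r^2 \<and> (\<forall>s. 0 < s \<longrightarrow> s < \<gamma> \<longrightarrow> fd a \<alpha> s < r^2)
      \<and> g_r a r (ell_param a \<alpha>) = ell_param a (\<alpha>+\<gamma>)"
proof -
  have a0: "a \<noteq> 0" using a by auto
  obtain D where D: "0 < D" "D < 2*pi" "farthest a (ell_param a \<alpha>) = ell_param a (\<alpha>+D)"
     "\<forall>t\<in>{0..2*pi}. fd a \<alpha> t \<le> fd a \<alpha> D"
     "\<forall>x y. 0 \<le> x \<longrightarrow> x < y \<longrightarrow> y \<le> D \<longrightarrow> fd a \<alpha> x < fd a \<alpha> y"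
    using core[OF a, of \<alpha>] by blast
  have "fd a \<alpha> pi \<le> fd a \<alpha> D" using D(4) pi_ge_zero by simp
  hence fD: "fd a \<alpha> D \<ge> 4" using fd_pi[OF a(1), of \<alpha>] by linarith
  have r2: "r^2 < 4" using r by (simp add: power_strict_mono[of r 2 2, simplified])
  have "fd a \<alpha> 0 \<le> r^2" "r^2 \<le> fd a \<alpha> D" using fd_0 fD r2 by auto
  then obtain \<gamma> where g: "0 \<le> \<gamma>" "\<gamma> \<le> D" "fd a \<alpha> \<gamma> = r^2"
    using IVT'[of "fd a \<alpha>" 0 "r^2" D] D(1) fd_cont by auto
  have g0: "0 < \<gamma>" using g fd_0[of a \<alpha>] r by (cases "\<gamma> = 0") auto
  have gpi: "\<gamma> < pi"
  proof (rule ccontr)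
    assume "\<not> \<gamma> < pi"
    hence "fd a \<alpha> pi \<le> fd a \<alpha> \<gamma>"
      using D(5)[rule_format, of pi \<gamma>] g pi_gt_zero by (cases "pi = \<gamma>") auto
    thus False using g(3) r2 fd_pi[OF a(1), of \<alpha>] by linarith
  qed
  have below: "\<forall>s. 0 < s \<longrightarrow> s < \<gamma> \<longrightarrow> fd a \<alpha> s < r^2"
  proof (intro allI impI)
    fix s assume "0 < s" "s < \<gamma>"
    thus "fd a \<alpha> s < r^2" using D(5)[rule_format, of s \<gamma>] g by simp
  qed
  have gr: "g_r a r (ell_param a \<alpha>) = ell_param a (\<alpha>+\<gamma>)"
    unfolding g_r_def
  proof (rule the_equality)
    show "ell_param a (\<alpha>+\<gamma>) \<in> cw_arc_closed a (ell_param a \<alpha>) (farthest a (ell_param a \<alpha>)) \<and>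
        dist (ell_param a \<alpha>) (ell_param a (\<alpha>+\<gamma>)) = r"
      unfolding cw_arc_closed_def D(3) dist_param using g D r
      by (intro conjI CollectI exI[of _ \<alpha>] exI[of _ D] exI[of _ \<gamma>]) (auto simp: real_sqrt_abs)
    fix q assume q: "q \<in> cw_arc_closed a (ell_param a \<alpha>) (farthest a (ell_param a \<alpha>)) \<and>
        dist (ell_param a \<alpha>) q = r"
    then obtain \<alpha>' \<beta> s where w: "ell_param a \<alpha>' = ell_param a \<alpha>" "ell_param a (\<alpha>'+\<beta>) = ell_param a (\<alpha>+D)"
      "0 \<le> \<beta>" "\<beta> \<le> 2*pi" "0 \<le> s" "s \<le> \<beta>" "q = ell_param a (\<alpha>'+s)"
      unfolding cw_arc_closed_def D(3) by blast
    have "ell_param a (\<alpha>+\<beta>) = ell_param a (\<alpha>+D)" using w(2) param_shift[OF a0 w(1)] by simp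
    hence "\<alpha>+\<beta> = \<alpha>+D" using param_inj[OF a0] w(3,4) D(1,2) by force
    hence bD: "\<beta> = D" by simp
    have qs: "q = ell_param a (\<alpha>+s)" using w(7) param_shift[OF a0 w(1)] by simp
    have "sqrt (fd a \<alpha> s) = r" using q qs dist_param by metis
    hence fs: "fd a \<alpha> s = r^2" using fd_nonneg by (metis real_sqrt_pow2)
    have "s = \<gamma>"
    proof (rule ccontr)
      assume "s \<noteq> \<gamma>"
      hence "s < \<gamma> \<or> \<gamma> < s" by linarith
      thus False using D(5) g w(5,6) bD fs by (metis less_irrefl)
    qed
    thus "q = ell_param a (\<alpha>+\<gamma>)" using qs by simp
  qed
  show ?thesis using g0 gpi g(3) below gr by blast
qed

lemma arc_open_char:
  assumes a0: "a \<noteq> 0" and g: "0 < \<gamma>" "\<gamma> < 2*pi"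
  shows "z \<in> cw_arc_open a (ell_param a \<alpha>) (ell_param a (\<alpha>+\<gamma>)) \<longleftrightarrow> (\<exists>s. 0 < s \<and> s < \<gamma> \<and> z = ell_param a (\<alpha>+s))"
proof
  assume "z \<in> cw_arc_open a (ell_param a \<alpha>) (ell_param a (\<alpha>+\<gamma>))"
  then obtain \<alpha>' \<beta> s where w: "ell_param a \<alpha>' = ell_param a \<alpha>" "ell_param a (\<alpha>'+\<beta>) = ell_param a (\<alpha>+\<gamma>)"
      "0 < \<beta>" "\<beta> \<le> 2*pi" "0 < s" "s < \<beta>" "z = ell_param a (\<alpha>'+s)"
    unfolding cw_arc_open_def by blast
  have "ell_param a (\<alpha>+\<beta>) = ell_param a (\<alpha>+\<gamma>)" using w(2) param_shift[OF a0 w(1)] by simp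
  hence "\<alpha>+\<beta> = \<alpha>+\<gamma>" using param_inj[OF a0] w(3,4) g by force
  hence "\<beta> = \<gamma>" by simp
  thus "\<exists>s. 0 < s \<and> s < \<gamma> \<and> z = ell_param a (\<alpha>+s)" using w param_shift[OF a0 w(1)] by auto
next
  assume "\<exists>s. 0 < s \<and> s < \<gamma> \<and> z = ell_param a (\<alpha>+s)"
  then obtain s where "0 < s" "s < \<gamma>" "z = ell_param a (\<alpha>+s)" by blast
  thus "z \<in> cw_arc_open a (ell_param a \<alpha>) (ell_param a (\<alpha>+\<gamma>))"
    unfolding cw_arc_open_def mem_Collect_eq using g
    by (intro exI[of _ \<alpha>] exI[of _ \<gamma>] exI[of _ s]) auto
qed

lemma arc_half_char:
  assumes a0: "a \<noteq> 0" and g: "0 < \<gamma>" "\<gamma> < 2*pi"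
  shows "z \<in> cw_arc_half a (ell_param a \<alpha>) (ell_param a (\<alpha>+\<gamma>)) \<longleftrightarrow> (\<exists>s. 0 < s \<and> s \<le> \<gamma> \<and> z = ell_param a (\<alpha>+s))"
proof
  assume "z \<in> cw_arc_half a (ell_param a \<alpha>) (ell_param a (\<alpha>+\<gamma>))"
  then obtain \<alpha>' \<beta> s where w: "ell_param a \<alpha>' = ell_param a \<alpha>" "ell_param a (\<alpha>'+\<beta>) = ell_param a (\<alpha>+\<gamma>)"
      "0 < \<beta>" "\<beta> \<le> 2*pi" "0 < s" "s \<le> \<beta>" "z = ell_param a (\<alpha>'+s)"
    unfolding cw_arc_half_def by blast
  have "ell_param a (\<alpha>+\<beta>) = ell_param a (\<alpha>+\<gamma>)" using w(2) param_shift[OF a0 w(1)] by simp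
  hence "\<alpha>+\<beta> = \<alpha>+\<gamma>" using param_inj[OF a0] w(3,4) g by force
  hence "\<beta> = \<gamma>" by simp
  thus "\<exists>s. 0 < s \<and> s \<le> \<gamma> \<and> z = ell_param a (\<alpha>+s)" using w param_shift[OF a0 w(1)] by auto
next
  assume "\<exists>s. 0 < s \<and> s \<le> \<gamma> \<and> z = ell_param a (\<alpha>+s)"
  then obtain s where "0 < s" "s \<le> \<gamma>" "z = ell_param a (\<alpha>+s)" by blast
  thus "z \<in> cw_arc_half a (ell_param a \<alpha>) (ell_param a (\<alpha>+\<gamma>))"
    unfolding cw_arc_half_def mem_Collect_eq using g
    by (intro exI[of _ \<alpha>] exI[of _ \<gamma>] exI[of _ s]) auto
qed

lemma chord:
  assumes a: "1 < a" "a^2 \<le> 2" and s: "0 < s1" "s1 < s2" "s2 < pi" and f4: "fd a \<alpha> s2 < 4"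
  shows "dist (ell_param a (\<alpha>+s1)) (ell_param a (\<alpha>+s2)) < dist (ell_param a \<alpha>) (ell_param a (\<alpha>+s2))"
proof -
  define \<beta> where "\<beta> = \<alpha>+s2"
  obtain D where D: "0 < D" "D < 2*pi"
     "\<forall>x y. 0 \<le> x \<longrightarrow> x < y \<longrightarrow> y \<le> D \<longrightarrow> fd a \<beta> x < fd a \<beta> y"
     "\<forall>x y. D \<le> x \<longrightarrow> x < y \<longrightarrow> y \<le> 2*pi \<longrightarrow> fd a \<beta> y < fd a \<beta> x"
    using core[OF a, of \<beta>] by blast
  have pv: "ell_param a (\<beta> + (2*pi - s2)) = ell_param a \<alpha>"
    using param_period[of a \<alpha>] unfolding \<beta>_def by (simp add: algebra_simps)
  have pw: "ell_param a (\<beta> + (2*pi - (s2 - s1))) = ell_param a (\<alpha>+s1)"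
    using param_period[of a "\<alpha>+s1"] unfolding \<beta>_def by (simp add: algebra_simps)
  have e1: "fd a \<beta> (2*pi - s2) = fd a \<alpha> s2"
  proof -
    have "sqrt (fd a \<beta> (2*pi - s2)) = sqrt (fd a \<alpha> s2)"
      using dist_param[of a \<beta> "2*pi - s2"] dist_param[of a \<alpha> s2] pv unfolding \<beta>_def
      by (simp add: dist_commute)
    thus ?thesis by simp
  qed
  have Dle: "D \<le> 2*pi - s2"
  proof (rule ccontr)
    assume "\<not> D \<le> 2*pi - s2"
    hence "fd a \<beta> pi \<le> fd a \<beta> (2*pi - s2)"
      using D(3)[rule_format, of pi "2*pi - s2"] s pi_gt_zero by (cases "pi = 2*pi - s2") auto
    thus False using e1 f4 fd_pi[OF a(1), of \<beta>] by linarith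
  qed
  have "fd a \<beta> (2*pi - (s2 - s1)) < fd a \<beta> (2*pi - s2)" using D(4) Dle s by auto
  hence "sqrt (fd a \<beta> (2*pi - (s2 - s1))) < sqrt (fd a \<beta> (2*pi - s2))" by simp
  hence "dist (ell_param a \<beta>) (ell_param a (\<alpha>+s1)) < dist (ell_param a \<beta>) (ell_param a \<alpha>)"
    using dist_param[of a \<beta> "2*pi - s2"] dist_param[of a \<beta> "2*pi - (s2 - s1)"] pv pw by simp
  thus ?thesis unfolding \<beta>_def by (simp add: dist_commute)
qed

lemma lt_part:
  assumes a: "1 < a" "a^2 \<le> 2" and X: "X \<subseteq> ellipse a" and r: "0 < r" "r < 2"
  shows "cyclic_graph a X (VR_lt_dir a r X)"
proof -
  have a0: "a \<noteq> 0" using a by auto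
  have pi2: "pi < 2*pi" using pi_gt_zero by simp
  have r2: "r^2 < 4" using r by (simp add: power_strict_mono[of r 2 2, simplified])
  have surj: "\<And>v. v \<in> X \<Longrightarrow> \<exists>\<alpha>. ell_param a \<alpha> = v" using param_surj[OF a0] X by blast
  note gc = gr_char[OF a r]
  have dsq: "\<And>\<alpha> t. dist (ell_param a \<alpha>) (ell_param a (\<alpha>+t)) < r \<longleftrightarrow> fd a \<alpha> t < r^2"
    unfolding dist_param using r by (metis abs_of_pos fd_nonneg real_sqrt_abs real_sqrt_less_iff)
  have neq: "\<And>\<alpha> t. 0 < t \<Longrightarrow> t < 2*pi \<Longrightarrow> ell_param a (\<alpha>+t) \<noteq> ell_param a \<alpha>"
  proof
    fix \<alpha> t assume "0 < t" "t < 2*pi" "ell_param a (\<alpha>+t) = ell_param a \<alpha>"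
    hence "\<alpha>+t = \<alpha>" using param_inj[OF a0, of "\<alpha>+t" \<alpha>] by simp
    thus False using \<open>0 < t\<close> by simp
  qed
  show ?thesis
    unfolding cyclic_graph_def
  proof (intro conjI)
    show "\<forall>u v. VR_lt_dir a r X u v \<longrightarrow> u \<in> X \<and> v \<in> X" by (simp add: VR_lt_dir_def)
  next
    show "\<forall>v. \<not> VR_lt_dir a r X v v" by (simp add: VR_lt_dir_def)
  next
    show "\<forall>u v. \<not> (VR_lt_dir a r X v u \<and> VR_lt_dir a r X u v)"
    proof (intro allI notI)
      fix u v
      assume h: "VR_lt_dir a r X v u \<and> VR_lt_dir a r X u v"
      have "v \<in> X" using h by (simp add: VR_lt_dir_def)
      then obtain \<alpha> where v: "ell_param a \<alpha> = v" using surj by blast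
      obtain \<gamma> where g: "0 < \<gamma>" "\<gamma> < pi" "g_r a r (ell_param a \<alpha>) = ell_param a (\<alpha>+\<gamma>)"
        using gc[of \<alpha>] by blast
      have "u \<in> cw_arc_open a (ell_param a \<alpha>) (ell_param a (\<alpha>+\<gamma>))" using h v g(3) by (simp add: VR_lt_dir_def)
      then obtain s where s: "0 < s" "s < \<gamma>" "u = ell_param a (\<alpha>+s)"
        using arc_open_char[OF a0 g(1)] g(2) pi2 by (metis order.strict_trans)
      obtain \<gamma>' where g': "0 < \<gamma>'" "\<gamma>' < pi" "g_r a r (ell_param a (\<alpha>+s)) = ell_param a ((\<alpha>+s)+\<gamma>')"
        using gc[of "\<alpha>+s"] by blast
      have "v \<in> cw_arc_open a (ell_param a (\<alpha>+s)) (ell_param a ((\<alpha>+s)+\<gamma>'))" using h s g'(3) by (simp add: VR_lt_dir_def)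
      then obtain s' where s': "0 < s'" "s' < \<gamma>'" "v = ell_param a ((\<alpha>+s)+s')"
        using arc_open_char[OF a0 g'(1)] g'(2) pi2 by (metis order.strict_trans)
      have "ell_param a (\<alpha> + (s+s')) = ell_param a \<alpha>" using s' v by (simp add: add.assoc)
      moreover have "s + s' < 2*pi" using s s' g g' by linarith
      ultimately show False using neq[of "s+s'" \<alpha>] s s' by linarith
    qed
  next
    show "\<forall>v u. VR_lt_dir a r X v u \<longrightarrow> (\<forall>w\<in>X. w \<in> cw_arc_open a v u \<longrightarrow> VR_lt_dir a r X v w \<and> VR_lt_dir a r X w u)"
    proof (intro allI impI)
    fix v u assume vu: "VR_lt_dir a r X v u"
    have "v \<in> X" using vu by (simp add: VR_lt_dir_def)
    then obtain \<alpha> where v: "ell_param a \<alpha> = v" using surj by blast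
    obtain \<gamma> where g: "0 < \<gamma>" "\<gamma> < pi" "fd a \<alpha> \<gamma> = r^2" "\<forall>s. 0 < s \<longrightarrow> s < \<gamma> \<longrightarrow> fd a \<alpha> s < r^2"
        "g_r a r (ell_param a \<alpha>) = ell_param a (\<alpha>+\<gamma>)"
      using gc[of \<alpha>] by blast
    have "u \<in> cw_arc_open a (ell_param a \<alpha>) (ell_param a (\<alpha>+\<gamma>))" using vu v g(5) by (simp add: VR_lt_dir_def)
    then obtain s where s: "0 < s" "s < \<gamma>" "u = ell_param a (\<alpha>+s)"
      using arc_open_char[OF a0 g(1)] g(2) pi2 by (metis order.strict_trans)
    show "\<forall>w\<in>X. w \<in> cw_arc_open a v u \<longrightarrow> VR_lt_dir a r X v w \<and> VR_lt_dir a r X w u"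
    proof (intro ballI impI)
      fix w assume wX: "w \<in> X" and wa: "w \<in> cw_arc_open a v u"
      have "s < 2*pi" using s g pi2 by linarith
      then obtain s1 where s1: "0 < s1" "s1 < s" "w = ell_param a (\<alpha>+s1)"
        using wa arc_open_char[OF a0 s(1)] v s(3) by blast
      have vX: "v \<in> X" and uX: "u \<in> X" using vu by (auto simp: VR_lt_dir_def)
      have s1pi: "s1 < 2*pi" "s < 2*pi" using s1 s g pi2 by linarith+
      show "VR_lt_dir a r X v w \<and> VR_lt_dir a r X w u"
      proof
        show "VR_lt_dir a r X v w"
          unfolding VR_lt_dir_def
        proof (intro conjI)
          show "v \<in> X" "w \<in> X" by fact+
          show "v \<noteq> w" using neq[of s1 \<alpha>] s1 s1pi v by auto
          show "dist v w < r" using dsq[of \<alpha> s1] g(4) s1 s v by auto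
          have g2: "\<gamma> < 2*pi" using g(2) pi2 by linarith
          show "w \<in> cw_arc_open a v (g_r a r v)"
            unfolding v[symmetric] g(5) s1(3)
            by (subst arc_open_char[OF a0 g(1) g2]) (use s1 s in auto)
        qed
      next
        obtain \<gamma>w where gw: "0 < \<gamma>w" "\<gamma>w < pi" "fd a (\<alpha>+s1) \<gamma>w = r^2"
          "g_r a r (ell_param a (\<alpha>+s1)) = ell_param a ((\<alpha>+s1)+\<gamma>w)"
          using gc[of "\<alpha>+s1"] by blast
        have ch: "\<And>s2. s1 < s2 \<Longrightarrow> s2 \<le> s \<Longrightarrow> dist w (ell_param a (\<alpha>+s2)) < r"
        proof -
          fix s2 assume "s1 < s2" "s2 \<le> s"
          hence f2: "fd a \<alpha> s2 < r^2" using g(4) s s1 by auto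
          have "dist w (ell_param a (\<alpha>+s2)) < dist (ell_param a \<alpha>) (ell_param a (\<alpha>+s2))"
            using chord[OF a s1(1) \<open>s1 < s2\<close>, of \<alpha>] s1(3) f2 r2 \<open>s2 \<le> s\<close> s g(2) by auto
          also have "\<dots> < r" using dsq f2 by blast
          finally show "dist w (ell_param a (\<alpha>+s2)) < r" .
        qed
        have less: "s - s1 < \<gamma>w"
        proof (rule ccontr)
          assume "\<not> s - s1 < \<gamma>w"
          hence "dist w (ell_param a (\<alpha>+(s1+\<gamma>w))) < r" using ch[of "s1+\<gamma>w"] gw by auto
          moreover have "dist w (ell_param a (\<alpha>+(s1+\<gamma>w))) = r"
            using dist_param[of a "\<alpha>+s1" \<gamma>w] gw(3) s1(3) r by (simp add: add.assoc)
          ultimately show False by simp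
        qed
        show "VR_lt_dir a r X w u"
          unfolding VR_lt_dir_def
        proof (intro conjI)
          show "w \<in> X" "u \<in> X" by fact+
          have "\<alpha>+s1 \<noteq> \<alpha>+s" using s1 by simp
          thus "w \<noteq> u" using param_inj[OF a0, of "\<alpha>+s1" "\<alpha>+s"] s1 s s1pi by auto
          show "dist w u < r" using ch[of s] s1 s by simp
          have "u = ell_param a ((\<alpha>+s1) + (s-s1))" using s by simp
          moreover have g2: "\<gamma>w < 2*pi" using gw(2) pi2 by linarith
          ultimately show "u \<in> cw_arc_open a w (g_r a r w)"
            unfolding s1(3) gw(4)
            by (subst arc_open_char[OF a0 gw(1) g2]) (rule exI[of _ "s - s1"], use s1 less s in auto)
        qed
      qed
    qed
    qed
  qed
qed


lemma le_part:
  assumes a: "1 < a" "a^2 \<le> 2" and X: "X \<subseteq> ellipse a" and r: "0 < r" "r < 2"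
  shows "cyclic_graph a X (VR_le_dir a r X)"
proof -
  have a0: "a \<noteq> 0" using a by auto
  have pi2: "pi < 2*pi" using pi_gt_zero by simp
  have r2: "r^2 < 4" using r by (simp add: power_strict_mono[of r 2 2, simplified])
  have surj: "\<And>v. v \<in> X \<Longrightarrow> \<exists>\<alpha>. ell_param a \<alpha> = v" using param_surj[OF a0] X by blast
  note gc = gr_char[OF a r]
  have dsq: "\<And>\<alpha> t. dist (ell_param a \<alpha>) (ell_param a (\<alpha>+t)) < r \<longleftrightarrow> fd a \<alpha> t < r^2"
    unfolding dist_param using r by (metis abs_of_pos fd_nonneg real_sqrt_abs real_sqrt_less_iff)
  have dsq2: "\<And>\<alpha> t. dist (ell_param a \<alpha>) (ell_param a (\<alpha>+t)) \<le> r \<longleftrightarrow> fd a \<alpha> t \<le> r^2"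
    unfolding dist_param using r by (metis abs_of_pos fd_nonneg real_sqrt_abs real_sqrt_le_iff)
  have neq: "\<And>\<alpha> t. 0 < t \<Longrightarrow> t < 2*pi \<Longrightarrow> ell_param a (\<alpha>+t) \<noteq> ell_param a \<alpha>"
  proof
    fix \<alpha> t assume "0 < t" "t < 2*pi" "ell_param a (\<alpha>+t) = ell_param a \<alpha>"
    hence "\<alpha>+t = \<alpha>" using param_inj[OF a0, of "\<alpha>+t" \<alpha>] by simp
    thus False using \<open>0 < t\<close> by simp
  qed
  show ?thesis
    unfolding cyclic_graph_def
  proof (intro conjI)
    show "\<forall>u v. VR_le_dir a r X u v \<longrightarrow> u \<in> X \<and> v \<in> X" by (simp add: VR_le_dir_def)
  next
    show "\<forall>v. \<not> VR_le_dir a r X v v" by (simp add: VR_le_dir_def)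
  next
    show "\<forall>u v. \<not> (VR_le_dir a r X v u \<and> VR_le_dir a r X u v)"
    proof (intro allI notI)
      fix u v
      assume h: "VR_le_dir a r X v u \<and> VR_le_dir a r X u v"
      have "v \<in> X" using h by (simp add: VR_le_dir_def)
      then obtain \<alpha> where v: "ell_param a \<alpha> = v" using surj by blast
      obtain \<gamma> where g: "0 < \<gamma>" "\<gamma> < pi" "g_r a r (ell_param a \<alpha>) = ell_param a (\<alpha>+\<gamma>)"
        using gc[of \<alpha>] by blast
      have "u \<in> cw_arc_half a (ell_param a \<alpha>) (ell_param a (\<alpha>+\<gamma>))" using h v g(3) by (simp add: VR_le_dir_def)
      then obtain s where s: "0 < s" "s \<le> \<gamma>" "u = ell_param a (\<alpha>+s)"
        using arc_half_char[OF a0 g(1)] g(2) pi2 by (metis order.strict_trans)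
      obtain \<gamma>' where g': "0 < \<gamma>'" "\<gamma>' < pi" "g_r a r (ell_param a (\<alpha>+s)) = ell_param a ((\<alpha>+s)+\<gamma>')"
        using gc[of "\<alpha>+s"] by blast
      have "v \<in> cw_arc_half a (ell_param a (\<alpha>+s)) (ell_param a ((\<alpha>+s)+\<gamma>'))" using h s g'(3) by (simp add: VR_le_dir_def)
      then obtain s' where s': "0 < s'" "s' \<le> \<gamma>'" "v = ell_param a ((\<alpha>+s)+s')"
        using arc_half_char[OF a0 g'(1)] g'(2) pi2 by (metis order.strict_trans)
      have "ell_param a (\<alpha> + (s+s')) = ell_param a \<alpha>" using s' v by (simp add: add.assoc)
      moreover have "s + s' < 2*pi" using s s' g g' by linarith
      ultimately show False using neq[of "s+s'" \<alpha>] s s' by linarith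
    qed
  next
    show "\<forall>v u. VR_le_dir a r X v u \<longrightarrow> (\<forall>w\<in>X. w \<in> cw_arc_open a v u \<longrightarrow> VR_le_dir a r X v w \<and> VR_le_dir a r X w u)"
    proof (intro allI impI)
    fix v u assume vu: "VR_le_dir a r X v u"
    have "v \<in> X" using vu by (simp add: VR_le_dir_def)
    then obtain \<alpha> where v: "ell_param a \<alpha> = v" using surj by blast
    obtain \<gamma> where g: "0 < \<gamma>" "\<gamma> < pi" "fd a \<alpha> \<gamma> = r^2" "\<forall>s. 0 < s \<longrightarrow> s < \<gamma> \<longrightarrow> fd a \<alpha> s < r^2"
        "g_r a r (ell_param a \<alpha>) = ell_param a (\<alpha>+\<gamma>)"
      using gc[of \<alpha>] by blast
    have "u \<in> cw_arc_half a (ell_param a \<alpha>) (ell_param a (\<alpha>+\<gamma>))" using vu v g(5) by (simp add: VR_le_dir_def)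
    then obtain s where s: "0 < s" "s \<le> \<gamma>" "u = ell_param a (\<alpha>+s)"
      using arc_half_char[OF a0 g(1)] g(2) pi2 by (metis order.strict_trans)
    show "\<forall>w\<in>X. w \<in> cw_arc_open a v u \<longrightarrow> VR_le_dir a r X v w \<and> VR_le_dir a r X w u"
    proof (intro ballI impI)
      fix w assume wX: "w \<in> X" and wa: "w \<in> cw_arc_open a v u"
      have "s < 2*pi" using s g pi2 by linarith
      then obtain s1 where s1: "0 < s1" "s1 < s" "w = ell_param a (\<alpha>+s1)"
        using wa arc_open_char[OF a0 s(1)] v s(3) by blast
      have vX: "v \<in> X" and uX: "u \<in> X" using vu by (auto simp: VR_le_dir_def)
      have s1pi: "s1 < 2*pi" "s < 2*pi" using s1 s g pi2 by linarith+
      show "VR_le_dir a r X v w \<and> VR_le_dir a r X w u"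
      proof
        show "VR_le_dir a r X v w"
          unfolding VR_le_dir_def
        proof (intro conjI)
          show "v \<in> X" "w \<in> X" by fact+
          show "v \<noteq> w" using neq[of s1 \<alpha>] s1 s1pi v by auto
          show "dist v w \<le> r" using dsq[of \<alpha> s1] g(4) s1 s v by auto
          have g2: "\<gamma> < 2*pi" using g(2) pi2 by linarith
          show "w \<in> cw_arc_half a v (g_r a r v)"
            unfolding v[symmetric] g(5) s1(3)
            by (subst arc_half_char[OF a0 g(1) g2]) (use s1 s in auto)
        qed
      next
        obtain \<gamma>w where gw: "0 < \<gamma>w" "\<gamma>w < pi" "fd a (\<alpha>+s1) \<gamma>w = r^2"
          "g_r a r (ell_param a (\<alpha>+s1)) = ell_param a ((\<alpha>+s1)+\<gamma>w)"
          using gc[of "\<alpha>+s1"] by blast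
        have ch: "\<And>s2. s1 < s2 \<Longrightarrow> s2 \<le> s \<Longrightarrow> dist w (ell_param a (\<alpha>+s2)) < r"
        proof -
          fix s2 assume "s1 < s2" "s2 \<le> s"
          hence f2: "fd a \<alpha> s2 \<le> r^2"
          proof (cases "s2 = \<gamma>")
            case False
            hence "s2 < \<gamma>" using \<open>s2 \<le> s\<close> s by linarith
            moreover have "0 < s2" using s1(1) \<open>s1 < s2\<close> by linarith
            ultimately have "fd a \<alpha> s2 < r^2" using g(4) by blast
            thus ?thesis by simp
          qed (use g(3) in simp)
          have "dist w (ell_param a (\<alpha>+s2)) < dist (ell_param a \<alpha>) (ell_param a (\<alpha>+s2))"
            using chord[OF a s1(1) \<open>s1 < s2\<close>, of \<alpha>] s1(3) f2 r2 \<open>s2 \<le> s\<close> s g(2) by auto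
          also have "\<dots> \<le> r" using dsq2 f2 by blast
          finally show "dist w (ell_param a (\<alpha>+s2)) < r" .
        qed
        have less: "s - s1 \<le> \<gamma>w"
        proof (rule ccontr)
          assume "\<not> s - s1 \<le> \<gamma>w"
          hence "dist w (ell_param a (\<alpha>+(s1+\<gamma>w))) < r" using ch[of "s1+\<gamma>w"] gw by auto
          moreover have "dist w (ell_param a (\<alpha>+(s1+\<gamma>w))) = r"
            using dist_param[of a "\<alpha>+s1" \<gamma>w] gw(3) s1(3) r by (simp add: add.assoc)
          ultimately show False by simp
        qed
        show "VR_le_dir a r X w u"
          unfolding VR_le_dir_def
        proof (intro conjI)
          show "w \<in> X" "u \<in> X" by fact+
          have "\<alpha>+s1 \<noteq> \<alpha>+s" using s1 by simp
          thus "w \<noteq> u" using param_inj[OF a0, of "\<alpha>+s1" "\<alpha>+s"] s1 s s1pi by auto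
          show "dist w u \<le> r" using ch[of s] s1 s by simp
          have "u = ell_param a ((\<alpha>+s1) + (s-s1))" using s by simp
          moreover have g2: "\<gamma>w < 2*pi" using gw(2) pi2 by linarith
          ultimately show "u \<in> cw_arc_half a w (g_r a r w)"
            unfolding s1(3) gw(4)
            by (subst arc_half_char[OF a0 gw(1) g2]) (rule exI[of _ "s - s1"], use s1 less s in auto)
        qed
      qed
    qed
    qed
  qed
qed

theorem mainTheorem19:
  fixes a r :: real and X :: "(real \<times> real) set"
  assumes "1 < a" and "a \<le> sqrt 2"
    and "X \<subseteq> ellipse a"
    and "0 < r" and "r < 2"
  shows "cyclic_graph a X (VR_lt_dir a r X) \<and> cyclic_graph a X (VR_le_dir a r X)"
proof -
  have "a^2 \<le> (sqrt 2)^2" using assms(1,2) by (intro power_mono) auto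
  hence a2: "a^2 \<le> 2" by simp
  show ?thesis using lt_part[OF assms(1) a2 assms(3-5)] le_part[OF assms(1) a2 assms(3-5)] by blast
qed

end
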